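(* Let $N\ge d$ and let $K\subset\mathbb{R}^d$ be a compact convex polytope of dimension $d$ with $N+1$ faces of codimension $1$, denoted $F_0,\dots,F_N$. Let $H_0,\dots,H_N$ be the hyperplanes with $F_j\subset H_j$, and let $n_0,\dots,n_N$ be corresponding normal vectors. Suppose every collection of $d$ vectors in $\{n_0,\dots,n_N\}$ is linearly independent. Then $K$ is an intersection of finitely many $d$-dimensional simplices, $$K=\bigcap_{j=1}^M S_j,\qquad M\le \binom{N+1}{d+1},$$ such that each (codimension-one) face of each $S_j$ contains a face of $K$.
   Context: A hyperplane $H=\{x\in\mathbb{R}^d\colon l(x)=0\}$ is the zero set of a nonconstant affine function $l(x)=n\cdot x+b$. The vector $n$ is a normal vector of $H$. *)

theory Defs
  imports "HOL-Analysis.Analysis"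
begin

end

theory Submission
  imports Defs
begin


lemma hyp_incl:
  fixes a n :: "'a::euclidean_space"
  assumes "a \<noteq> 0" "{x. a \<bullet> x = \<beta>} \<subseteq> {x. n \<bullet> x = \<gamma>}"
  shows "n = (n \<bullet> a / (a \<bullet> a)) *\<^sub>R a \<and> \<gamma> = (n \<bullet> a / (a \<bullet> a)) * \<beta>"
proof -
  define x0 where "x0 = (\<beta> / (a \<bullet> a)) *\<^sub>R a"
  have aa: "a \<bullet> a \<noteq> 0" using assms by simp
  have x0: "a \<bullet> x0 = \<beta>" using aa by (simp add: x0_def)
  define w where "w = n - (n \<bullet> a / (a \<bullet> a)) *\<^sub>R a"
  have aw: "a \<bullet> w = 0" using aa by (simp add: w_def inner_diff_right inner_commute)
  have "a \<bullet> (x0 + w) = \<beta>" using x0 aw by (simp add: inner_add_right)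
  then have "n \<bullet> (x0 + w) = \<gamma>" using assms(2) by blast
  moreover have "n \<bullet> x0 = \<gamma>" using x0 assms(2) by blast
  ultimately have nw: "n \<bullet> w = 0" by (simp add: inner_add_right)
  have "w \<bullet> w = n \<bullet> w - (n \<bullet> a / (a \<bullet> a)) * (a \<bullet> w)"
    by (simp add: w_def inner_diff_left)
  then have "w \<bullet> w = 0" using nw aw by simp
  then have "w = 0" by simp
  then have n: "n = (n \<bullet> a / (a \<bullet> a)) *\<^sub>R a" by (simp add: w_def)
  have "\<gamma> = n \<bullet> x0" using x0 assms(2) by blast
  also have "\<dots> = (n \<bullet> a / (a \<bullet> a)) * \<beta>" by (subst n) (simp add: x0)
  finally show ?thesis using n by simp
qed

lemma indep_index:
  fixes w :: "nat \<Rightarrow> 'a::euclidean_space"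
  assumes "finite A" "inj_on w A"
  shows "independent (w ` A) \<longleftrightarrow> (\<forall>\<nu>. (\<Sum>j\<in>A. \<nu> j *\<^sub>R w j) = 0 \<longrightarrow> (\<forall>j\<in>A. \<nu> j = 0))"
proof
  assume ind: "independent (w ` A)"
  show "\<forall>\<nu>. (\<Sum>j\<in>A. \<nu> j *\<^sub>R w j) = 0 \<longrightarrow> (\<forall>j\<in>A. \<nu> j = 0)"
  proof (intro allI impI ballI)
    fix \<nu> j assume s: "(\<Sum>j\<in>A. \<nu> j *\<^sub>R w j) = 0" and j: "j \<in> A"
    define U where "U v = \<nu> (inv_into A w v)" for v
    have "(\<Sum>v\<in>w ` A. U v *\<^sub>R v) = (\<Sum>j\<in>A. U (w j) *\<^sub>R w j)"
      by (rule sum.reindex[OF assms(2), unfolded comp_def])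
    also have "\<dots> = (\<Sum>j\<in>A. \<nu> j *\<^sub>R w j)"
      by (rule sum.cong) (auto simp: U_def assms(2))
    finally have "(\<Sum>v\<in>w ` A. U v *\<^sub>R v) = 0" using s by simp
    then have "\<forall>v\<in>w ` A. U v = 0" using ind dependent_finite[of "w ` A"] assms(1) by blast
    then show "\<nu> j = 0" using j by (auto simp: U_def assms(2))
  qed
next
  assume H: "\<forall>\<nu>. (\<Sum>j\<in>A. \<nu> j *\<^sub>R w j) = 0 \<longrightarrow> (\<forall>j\<in>A. \<nu> j = 0)"
  show "independent (w ` A)"
  proof
    assume "dependent (w ` A)"
    then obtain U where U: "\<exists>v\<in>w ` A. U v \<noteq> 0" "(\<Sum>v\<in>w ` A. U v *\<^sub>R v) = 0"
      using dependent_finite[of "w ` A"] assms(1) by auto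
    have "(\<Sum>v\<in>w ` A. U v *\<^sub>R v) = (\<Sum>j\<in>A. U (w j) *\<^sub>R w j)"
      by (rule sum.reindex[OF assms(2), unfolded comp_def])
    then have "\<forall>j\<in>A. U (w j) = 0" using H U(2) by auto
    then show False using U(1) by auto
  qed
qed

lemma basis_zero:
  fixes u :: "nat \<Rightarrow> 'a::euclidean_space"
  assumes "finite A" "card A = DIM('a)" "inj_on u A" "independent (u ` A)"
    and "\<And>j. j \<in> A \<Longrightarrow> u j \<bullet> z = 0"
  shows "z = 0"
proof -
  have "card (u ` A) = DIM('a)" using assms by (simp add: card_image)
  then have "(UNIV::'a set) \<subseteq> span (u ` A)"
    using card_ge_dim_independent[of "u ` A" UNIV] assms(4) by simp
  then have "z \<in> span (u ` A)" by blast
  then have "orthogonal z z"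
    by (rule orthogonal_to_span) (use assms(5) in \<open>auto simp: orthogonal_def inner_commute\<close>)
  then show ?thesis by (simp add: orthogonal_self)
qed

lemma solve_sys:
  fixes u :: "nat \<Rightarrow> 'a::euclidean_space"
  assumes "finite A" "card A = DIM('a)" "inj_on u A" "independent (u ` A)"
  shows "\<exists>v. \<forall>j\<in>A. u j \<bullet> v = c j"
proof -
  have "\<exists>w. u k \<bullet> w = 1 \<and> (\<forall>j\<in>A - {k}. u j \<bullet> w = 0)" if k: "k \<in> A" for k
  proof -
    have "card (u ` (A - {k})) \<le> card (A - {k})" by (rule card_image_le) (use assms in auto)
    also have "\<dots> < DIM('a)" using k assms by (simp add: card_Diff_singleton)
    finally have "dim (u ` (A - {k})) < DIM('a)"
      using dim_le_card'[of "u ` (A - {k})"] assms(1) by (meson finite_Diff finite_imageI le_less_trans)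
    then obtain x where x: "x \<noteq> 0" "\<And>y. y \<in> span (u ` (A - {k})) \<Longrightarrow> orthogonal x y"
      using orthogonal_to_subspace_exists by blast
    have xo: "u j \<bullet> x = 0" if "j \<in> A - {k}" for j
      using x(2)[of "u j"] that by (auto simp: orthogonal_def inner_commute span_base)
    have "u k \<bullet> x \<noteq> 0"
    proof
      assume "u k \<bullet> x = 0"
      then have "\<And>j. j \<in> A \<Longrightarrow> u j \<bullet> x = 0" using xo by blast
      then have "x = 0" by (rule basis_zero[OF assms])
      then show False using x by simp
    qed
    then show ?thesis
      by (intro exI[of _ "(1 / (u k \<bullet> x)) *\<^sub>R x"]) (simp add: xo)
  qed
  then obtain w where w: "\<And>k. k \<in> A \<Longrightarrow> u k \<bullet> w k = 1 \<and> (\<forall>j\<in>A - {k}. u j \<bullet> w k = 0)"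
    by metis
  show ?thesis
  proof (intro exI ballI)
    fix j assume j: "j \<in> A"
    have "u j \<bullet> (\<Sum>k\<in>A. c k *\<^sub>R w k) = (\<Sum>k\<in>A. c k * (u j \<bullet> w k))"
      by (simp add: inner_sum_right)
    also have "\<dots> = (\<Sum>k\<in>A. if k = j then c j else 0)"
      by (rule sum.cong) (use w j in auto)
    also have "\<dots> = c j" using j assms(1) by simp
    finally show "u j \<bullet> (\<Sum>k\<in>A. c k *\<^sub>R w k) = c j" .
  qed
qed




lemma simplex_part:
  fixes u :: "nat \<Rightarrow> 'a::euclidean_space"
  assumes J: "finite J" "card J = DIM('a) + 1"
   and lpos: "\<forall>j\<in>J. l j > 0" and lsum: "(\<Sum>j\<in>J. l j *\<^sub>R u j) = 0"
   and solv: "\<forall>k\<in>J. \<exists>v. \<forall>j\<in>J-{k}. u j \<bullet> v = c j"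
   and uniq: "\<forall>k\<in>J. \<forall>z. (\<forall>j\<in>J-{k}. u j \<bullet> z = 0) \<longrightarrow> z = 0"
   and p: "\<forall>j\<in>J. u j \<bullet> p < c j"
  shows "int DIM('a) simplex {y. \<forall>j\<in>J. u j \<bullet> y \<le> c j} \<and>
     (\<forall>G. G facet_of {y. \<forall>j\<in>J. u j \<bullet> y \<le> c j} \<longrightarrow>
        (\<exists>k\<in>J. {y. (\<forall>j\<in>J. u j \<bullet> y \<le> c j) \<and> u k \<bullet> y = c k} \<subseteq> G))"
proof -
  define T where "T = {y. \<forall>j\<in>J. u j \<bullet> y \<le> c j}"
  obtain v where v: "\<And>k j. k \<in> J \<Longrightarrow> j \<in> J - {k} \<Longrightarrow> u j \<bullet> v k = c j"
    using solv by metis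
  define s where "s j y = l j * (c j - u j \<bullet> y)" for j y
  define C where "C = (\<Sum>j\<in>J. l j * c j)"
  have sumS: "(\<Sum>j\<in>J. s j y) = C" for y
  proof -
    have "(\<Sum>j\<in>J. l j * (u j \<bullet> y)) = (\<Sum>j\<in>J. l j *\<^sub>R u j) \<bullet> y"
      by (simp add: inner_sum_left)
    then have "(\<Sum>j\<in>J. l j * (u j \<bullet> y)) = 0" using lsum by simp
    then show ?thesis
      by (simp add: s_def C_def right_diff_distrib sum_subtractf)
  qed
  have Jne: "J \<noteq> {}" using J by auto
  have Cpos: "C > 0"
  proof -
    have "0 < (\<Sum>j\<in>J. s j p)"
      by (rule sum_pos[OF J(1) Jne]) (use lpos p in \<open>auto simp: s_def\<close>)
    then show ?thesis using sumS by simp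
  qed
  have svk: "s k (v k) = C" if k: "k \<in> J" for k
  proof -
    have "C = s k (v k) + (\<Sum>j\<in>J - {k}. s j (v k))"
      using sumS[of "v k"] sum.remove[OF J(1) k, of "\<lambda>j. s j (v k)"] by simp
    also have "(\<Sum>j\<in>J - {k}. s j (v k)) = 0"
      by (rule sum.neutral) (use v k in \<open>auto simp: s_def\<close>)
    finally show ?thesis by simp
  qed
  have uv: "u j \<bullet> v k = c j - (if k = j then C / l j else 0)" if "j \<in> J" "k \<in> J" for j k
  proof (cases "k = j")
    case True
    have "l j * (c j - u j \<bullet> v j) = C" using svk[OF that(1)] by (simp add: s_def)
    moreover have "l j > 0" using lpos that by auto
    ultimately have "c j - u j \<bullet> v j = C / l j" by (simp add: field_simps)
    then show ?thesis using True by simp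
  next
    case False then show ?thesis using v that by auto
  qed
  define \<alpha> where "\<alpha> y k = s k y / C" for y k
  have asum: "(\<Sum>k\<in>J. \<alpha> y k) = 1" for y
    using sumS[of y] Cpos by (simp add: \<alpha>_def sum_divide_distrib[symmetric])
  have rep: "y = (\<Sum>k\<in>J. \<alpha> y k *\<^sub>R v k)" for y
  proof -
    define z where "z = (\<Sum>k\<in>J. \<alpha> y k *\<^sub>R v k)"
    have "u j \<bullet> (z - y) = 0" if j: "j \<in> J" for j
    proof -
      have "u j \<bullet> z = (\<Sum>k\<in>J. \<alpha> y k * (c j - (if k = j then C / l j else 0)))"
        unfolding z_def inner_sum_right by (rule sum.cong) (use uv j in auto)
      also have "\<dots> = (\<Sum>k\<in>J. \<alpha> y k * c j - (if k = j then \<alpha> y k * (C / l j) else 0))"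
        by (rule sum.cong) (auto simp: right_diff_distrib)
      also have "\<dots> = (\<Sum>k\<in>J. \<alpha> y k * c j) - (\<Sum>k\<in>J. (if k = j then \<alpha> y k * (C / l j) else 0))"
        by (rule sum_subtractf)
      also have "\<dots> = c j - \<alpha> y j * (C / l j)"
        using j J(1) asum[of y] by (simp add: sum_distrib_right[symmetric])
      also have "\<dots> = u j \<bullet> y"
      proof -
        have "l j > 0" using lpos j by auto
        then show ?thesis using Cpos by (simp add: \<alpha>_def s_def field_simps)
      qed
      finally show ?thesis by (simp add: inner_diff_right)
    qed
    then have "z - y = 0" using uniq Jne by blast
    then show ?thesis by (simp add: z_def)
  qed
  have ukvk: "u k \<bullet> v k < c k" if "k \<in> J" for k
    using uv[OF that that] Cpos lpos that by simp
  have injv: "inj_on v J"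
  proof (rule inj_onI)
    fix k m assume km: "k \<in> J" "m \<in> J" "v k = v m"
    show "k = m"
    proof (rule ccontr)
      assume "k \<noteq> m"
      then have "u k \<bullet> v m = c k" using v km by auto
      then show False using ukvk[OF km(1)] km(3) by simp
    qed
  qed
  define V where "V = v ` J"
  have convT: "convex T"
  proof -
    have "T = (\<Inter>j\<in>J. {y. u j \<bullet> y \<le> c j})" by (auto simp: T_def)
    then show ?thesis by (simp add: convex_INT convex_halfspace_le)
  qed
  have VT: "V \<subseteq> T"
    using uv ukvk Cpos lpos by (fastforce simp: V_def T_def)
  have aT: "\<alpha> y k \<ge> 0" if "y \<in> T" "k \<in> J" for y k
    using that Cpos lpos by (auto simp: \<alpha>_def s_def T_def)
  have TV: "T = convex hull V"
  proof
    show "convex hull V \<subseteq> T" using hull_minimal[of V T convex] VT convT by blast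
  next
    show "T \<subseteq> convex hull V"
    proof
      fix y assume y: "y \<in> T"
      have "(\<Sum>k\<in>J. \<alpha> y k *\<^sub>R v k) \<in> convex hull V"
        by (rule convex_sum[OF J(1) convex_convex_hull asum]) (use aT y in \<open>auto simp: V_def hull_inc\<close>)
      then show "y \<in> convex hull V" using rep[of y] by simp
    qed
  qed
  have indV: "\<not> affine_dependent V"
  proof
    assume "affine_dependent V"
    then obtain x where x: "x \<in> V" "x \<in> affine hull (V - {x})" by (auto simp: affine_dependent_def)
    then obtain k where k: "k \<in> J" "x = v k" by (auto simp: V_def)
    have "V - {x} \<subseteq> {y. u k \<bullet> y = c k}"
      using v k by (auto simp: V_def)
    then have "affine hull (V - {x}) \<subseteq> {y. u k \<bullet> y = c k}"
      by (rule hull_minimal) (rule affine_hyperplane)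
    then show False using x k ukvk[OF k(1)] by auto
  qed
  have cardV: "card V = DIM('a) + 1" using J injv by (simp add: V_def card_image)
  have simp: "int DIM('a) simplex T"
    unfolding TV by (rule simplex_convex_hull) (use indV cardV in auto)
  have fac: "\<exists>k\<in>J. {y. (\<forall>j\<in>J. u j \<bullet> y \<le> c j) \<and> u k \<bullet> y = c k} \<subseteq> G" if G: "G facet_of T" for G
  proof -
    obtain w where w: "w \<in> V" "G = convex hull (V - {w})"
      using G facet_of_convex_hull_affine_independent[OF indV] TV by auto
    then obtain k where k: "k \<in> J" "w = v k" by (auto simp: V_def)
    have "y \<in> G" if y: "y \<in> T" "u k \<bullet> y = c k" for y
    proof -
      have ak: "\<alpha> y k = 0" using y by (simp add: \<alpha>_def s_def)
      have "y = (\<Sum>m\<in>J. \<alpha> y m *\<^sub>R v m)" by (rule rep)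
      also have "\<dots> = (\<Sum>m\<in>J - {k}. \<alpha> y m *\<^sub>R v m)"
        using sum.remove[OF J(1) k(1), of "\<lambda>m. \<alpha> y m *\<^sub>R v m"] ak by simp
      also have "\<dots> \<in> convex hull (V - {w})"
      proof (rule convex_sum[OF _ convex_convex_hull])
        show "(\<Sum>m\<in>J - {k}. \<alpha> y m) = 1"
          using asum[of y] sum.remove[OF J(1) k(1), of "\<alpha> y"] ak by simp
        show "\<And>m. m \<in> J - {k} \<Longrightarrow> 0 \<le> \<alpha> y m" using aT y by auto
        show "\<And>m. m \<in> J - {k} \<Longrightarrow> v m \<in> convex hull (V - {w})"
          using injv k by (intro hull_inc) (auto simp: V_def inj_on_def)
      qed (use J in auto)
      finally show ?thesis using w by simp
    qed
    then show ?thesis using k by (auto simp: T_def)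
  qed
  show ?thesis using simp fac unfolding T_def by blast
qed




lemma positive_circuit:
  fixes u :: "nat \<Rightarrow> 'a::euclidean_space"
  assumes I: "finite I" "i \<in> I"
   and indep: "\<And>B \<nu>. B \<subseteq> I \<Longrightarrow> card B \<le> DIM('a) \<Longrightarrow> (\<Sum>j\<in>B. \<nu> j *\<^sub>R u j) = 0 \<Longrightarrow> \<forall>j\<in>B. \<nu> j = 0"
   and dep: "\<And>B. B \<subseteq> I \<Longrightarrow> card B = DIM('a) + 1 \<Longrightarrow> \<exists>\<nu>. (\<Sum>j\<in>B. \<nu> j *\<^sub>R u j) = 0 \<and> (\<exists>j\<in>B. \<nu> j \<noteq> 0)"
   and l0: "\<forall>j. l0 j \<ge> 0" "\<forall>j. j \<notin> I \<longrightarrow> l0 j = 0" "l0 i > 0" "(\<Sum>j\<in>I. l0 j *\<^sub>R u j) = 0"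
  shows "\<exists>J l. J \<subseteq> I \<and> i \<in> J \<and> card J = DIM('a) + 1 \<and> (\<forall>j\<in>J. l j > 0) \<and> (\<Sum>j\<in>J. l j *\<^sub>R u j) = 0"
proof -
  define P where "P l \<longleftrightarrow> (\<forall>j. l j \<ge> 0) \<and> (\<forall>j. j \<notin> I \<longrightarrow> l j = 0) \<and> l i > 0 \<and> (\<Sum>j\<in>I. l j *\<^sub>R u j) = (0::'a)" for l :: "nat \<Rightarrow> real"
  define sp where "sp l = {j\<in>I. l j \<noteq> 0}" for l :: "nat \<Rightarrow> real"
  obtain l where Pl: "P l" and lmin: "\<And>l'. P l' \<Longrightarrow> card (sp l) \<le> card (sp l')"
    using ex_has_least_nat[of P l0 "\<lambda>l. card (sp l)"] l0 by (auto simp: P_def)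
  define J where "J = sp l"
  have JI: "J \<subseteq> I" and finJ: "finite J" using I by (auto simp: J_def sp_def)
  have iJ: "i \<in> J" using Pl I by (auto simp: J_def sp_def P_def)
  have lpos: "\<forall>j\<in>J. l j > 0" using Pl by (auto simp: J_def sp_def P_def order.strict_iff_order)
  have sumJ: "(\<Sum>j\<in>J. l j *\<^sub>R u j) = 0"
  proof -
    have "(\<Sum>j\<in>J. l j *\<^sub>R u j) = (\<Sum>j\<in>I. l j *\<^sub>R u j)"
      by (rule sum.mono_neutral_left[OF I(1) JI]) (auto simp: J_def sp_def)
    then show ?thesis using Pl by (simp add: P_def)
  qed
  have ge: "card J \<ge> DIM('a) + 1"
  proof (rule ccontr)
    assume "\<not> ?thesis"
    then have "card J \<le> DIM('a)" by simp
    then have "\<forall>j\<in>J. l j = 0" using indep[OF JI _ sumJ] by blast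
    then show False using iJ lpos by auto
  qed
  have le: "card J \<le> DIM('a) + 1"
  proof (rule ccontr)
    assume "\<not> ?thesis"
    then have "DIM('a) + 1 \<le> card (J - {i})" using iJ finJ by (simp add: card_Diff_singleton)
    then obtain B where B: "B \<subseteq> J - {i}" "card B = DIM('a) + 1" "finite B"
      using obtain_subset_with_card_n by metis
    have BI: "B \<subseteq> I" using B JI by auto
    obtain \<nu>0 where \<nu>0: "(\<Sum>j\<in>B. \<nu>0 j *\<^sub>R u j) = 0" "\<exists>j\<in>B. \<nu>0 j \<noteq> 0"
      using dep[OF BI B(2)] by blast
    obtain \<nu> where \<nu>: "(\<Sum>j\<in>B. \<nu> j *\<^sub>R u j) = 0" "\<exists>j\<in>B. \<nu> j > 0"
    proof (cases "\<exists>j\<in>B. \<nu>0 j > 0")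
      case True then show ?thesis using that \<nu>0 by blast
    next
      case False
      then have "\<exists>j\<in>B. - \<nu>0 j > 0" using \<nu>0(2) by force
      moreover have "(\<Sum>j\<in>B. (- \<nu>0 j) *\<^sub>R u j) = 0"
        using \<nu>0(1) by (simp add: sum_negf)
      ultimately show ?thesis using that[of "\<lambda>j. - \<nu>0 j"] by blast
    qed
    define Q where "Q = {j\<in>B. \<nu> j > 0}"
    have Qf: "finite Q" "Q \<noteq> {}" using B(3) \<nu>(2) by (auto simp: Q_def)
    define t where "t = Min ((\<lambda>j. l j / \<nu> j) ` Q)"
    have "t \<in> (\<lambda>j. l j / \<nu> j) ` Q"
      unfolding t_def by (rule Min_in) (use Qf in auto)
    then obtain jm where jm: "jm \<in> Q" "t = l jm / \<nu> jm" by blast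
    have tle: "t \<le> l j / \<nu> j" if "j \<in> Q" for j
      using Qf that by (auto simp: t_def)
    have t0: "t \<ge> 0" using jm Pl by (auto simp: Q_def P_def)
    define \<nu>' where "\<nu>' j = (if j \<in> B then \<nu> j else 0)" for j
    define l' where "l' j = l j - t * \<nu>' j" for j
    have P': "P l'"
      unfolding P_def
    proof (intro conjI allI impI)
      fix j
      show "0 \<le> l' j"
      proof (cases "j \<in> B \<and> \<nu> j > 0")
        case True
        then have "t \<le> l j / \<nu> j" using tle by (auto simp: Q_def)
        then have "t * \<nu> j \<le> l j" using True by (simp add: pos_le_divide_eq)
        then show ?thesis using True by (simp add: l'_def \<nu>'_def)
      next
        case False
        then have "t * \<nu>' j \<le> 0" using t0 by (auto simp: \<nu>'_def mult_nonneg_nonpos)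
        then show ?thesis using Pl by (simp add: l'_def P_def) (smt (verit))
      qed
    next
      fix j assume "j \<notin> I" then show "l' j = 0" using Pl BI by (auto simp: l'_def \<nu>'_def P_def)
    next
      show "l' i > 0" using Pl B(1) by (auto simp: l'_def \<nu>'_def P_def)
    next
      have "(\<Sum>j\<in>I. \<nu>' j *\<^sub>R u j) = (\<Sum>j\<in>B. \<nu> j *\<^sub>R u j)"
        using sum.mono_neutral_right[OF I(1) BI, of "\<lambda>j. \<nu>' j *\<^sub>R u j"]
        by (simp add: \<nu>'_def)
      then have "(\<Sum>j\<in>I. \<nu>' j *\<^sub>R u j) = 0" using \<nu>(1) by simp
      moreover have "(\<Sum>j\<in>I. (t * \<nu>' j) *\<^sub>R u j) = t *\<^sub>R (\<Sum>j\<in>I. \<nu>' j *\<^sub>R u j)"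
        by (simp add: scaleR_sum_right)
      moreover have "(\<Sum>j\<in>I. l' j *\<^sub>R u j) = (\<Sum>j\<in>I. l j *\<^sub>R u j) - (\<Sum>j\<in>I. (t * \<nu>' j) *\<^sub>R u j)"
        by (simp add: l'_def scaleR_diff_left sum_subtractf)
      ultimately show "(\<Sum>j\<in>I. l' j *\<^sub>R u j) = 0"
        using Pl by (simp add: P_def)
    qed
    have "sp l' \<subseteq> J - {jm}"
    proof
      fix j assume j: "j \<in> sp l'"
      have "j \<noteq> jm"
      proof
        assume "j = jm"
        then have "l' j = 0" using jm by (auto simp: l'_def \<nu>'_def Q_def)
        then show False using j by (auto simp: sp_def)
      qed
      moreover have "j \<in> J"
      proof (rule ccontr)
        assume "j \<notin> J"
        then have "j \<notin> B" "l j = 0 \<or> j \<notin> I" using B(1) by (auto simp: J_def sp_def)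
        then show False using j by (auto simp: sp_def l'_def \<nu>'_def)
      qed
      ultimately show "j \<in> J - {jm}" by simp
    qed
    moreover have "jm \<in> J" using jm B(1) by (auto simp: Q_def)
    ultimately have "sp l' \<subset> J" by blast
    then have "card (sp l') < card J"
      using finJ by (rule psubset_card_mono[rotated])
    then show False using lmin[OF P'] by (simp add: J_def)
  qed
  show ?thesis using JI iJ ge le lpos sumJ by (intro exI[of _ J] exI[of _ l]) auto
qed




lemma facet_hull:
  fixes K :: "'a::euclidean_space set"
  assumes "G facet_of K" "aff_dim K = int DIM('a)" "G \<subseteq> {x. a \<bullet> x = \<beta>}" "a \<noteq> 0"
  shows "affine hull G = {x. a \<bullet> x = \<beta>}"
proof (rule affine_dim_equal)
  show "affine (affine hull G)" by simp
  show "affine {x. a \<bullet> x = \<beta>}" by (rule affine_hyperplane)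
  show "affine hull G \<noteq> {}" using assms(1) by (simp add: facet_of_def)
  show "affine hull G \<subseteq> {x. a \<bullet> x = \<beta>}"
    using hull_minimal[of G "{x. a \<bullet> x = \<beta>}" affine] assms(3) affine_hyperplane by blast
  show "aff_dim (affine hull G) = aff_dim {x. a \<bullet> x = \<beta>}"
    using assms by (simp add: facet_of_def)
qed

lemma unbounded_ray:
  fixes K :: "'a::real_normed_vector set"
  assumes "bounded K" "y0 \<noteq> 0" "\<And>t. t \<ge> 0 \<Longrightarrow> p + t *\<^sub>R y0 \<in> K"
  shows False
proof -
  obtain B where B: "\<And>x. x \<in> K \<Longrightarrow> norm x \<le> B" using assms(1) by (auto simp: bounded_iff)
  define t where "t = (B + norm p + 1) / norm y0"
  have "p \<in> K" using assms(3)[of 0] by simp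
  then have B0: "B \<ge> 0" using B[of p] norm_ge_zero[of p] by linarith
  then have t0: "t \<ge> 0" using assms(2) by (simp add: t_def)
  have "norm (t *\<^sub>R y0) = B + norm p + 1"
    using assms(2) t0 B0 by (simp add: t_def)
  moreover have "norm (t *\<^sub>R y0) \<le> norm (p + t *\<^sub>R y0) + norm p"
    using norm_triangle_ineq4[of "p + t *\<^sub>R y0" p] by simp
  moreover have "norm (p + t *\<^sub>R y0) \<le> B" using B assms(3) t0 by blast
  ultimately show False by simp
qed


theorem theorem3p8:
  fixes K :: "'a::euclidean_space set"
    and N :: nat
    and F :: "nat \<Rightarrow> 'a set"
    and nv :: "nat \<Rightarrow> 'a"
    and b :: "nat \<Rightarrow> real"
  assumes "N \<ge> DIM('a)"
    and "polytope K"
    and "aff_dim K = int DIM('a)"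
    and "inj_on F {0..N}"
    and "F ` {0..N} = {G. G facet_of K}"
    and "\<And>j. j \<le> N \<Longrightarrow> nv j \<noteq> 0"
    and "\<And>j. j \<le> N \<Longrightarrow> F j \<subseteq> {x. nv j \<bullet> x + b j = 0}"
    and "\<And>J. J \<subseteq> {0..N} \<Longrightarrow> card J = DIM('a) \<Longrightarrow>
            inj_on nv J \<and> independent (nv ` J)"
  shows "\<exists>S :: 'a set set. finite S \<and> card S \<le> (N + 1) choose (DIM('a) + 1)
           \<and> (\<forall>T\<in>S. int DIM('a) simplex T)
           \<and> K = \<Inter> S
           \<and> (\<forall>T\<in>S. \<forall>G. G facet_of T \<longrightarrow> (\<exists>j\<le>N. F j \<subseteq> G))"
proof -
  define I where "I = {0..N}"
  have finI: "finite I" and cardI: "card I = N + 1" by (auto simp: I_def)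
  have polyK: "polyhedron K" using assms(2) by (rule polytope_imp_polyhedron)
  have affK: "affine hull K = UNIV" using assms(3) aff_dim_eq_full by blast
  obtain Fs where Fs: "finite Fs" "K = affine hull K \<inter> \<Inter>Fs"
      "\<And>h. h \<in> Fs \<Longrightarrow> \<exists>a b. a \<noteq> 0 \<and> h = {x. a \<bullet> x \<le> b}"
      "\<And>F'. F' \<subset> Fs \<Longrightarrow> K \<subset> affine hull K \<inter> \<Inter>F'"
    using polyK by (simp add: polyhedron_Int_affine_minimal) meson
  then obtain a \<beta> where ab: "\<And>h. h \<in> Fs \<Longrightarrow> a h \<noteq> 0 \<and> h = {x. a h \<bullet> x \<le> \<beta> h}"
    by metis
  have facetiff: "G facet_of K \<longleftrightarrow> (\<exists>h. h \<in> Fs \<and> G = K \<inter> {x. a h \<bullet> x = \<beta> h})" for G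
    by (rule facet_of_polyhedron_explicit[OF Fs(1) Fs(2) ab Fs(4)])
  have relint: "rel_interior K = {x \<in> K. \<forall>h \<in> Fs. a h \<bullet> x < \<beta> h}"
    by (rule rel_interior_polyhedron_explicit[OF Fs(1) Fs(2) ab Fs(4)])
  have "K \<noteq> {}" using assms(3) by auto
  then have "rel_interior K \<noteq> {}"
    using polyhedron_imp_convex[OF polyK] rel_interior_eq_empty by blast
  then obtain p where pK: "p \<in> K" and pstrict: "\<And>h. h \<in> Fs \<Longrightarrow> a h \<bullet> p < \<beta> h"
    using relint by auto
  have Kin: "y \<in> K \<longleftrightarrow> (\<forall>h\<in>Fs. a h \<bullet> y \<le> \<beta> h)" for y
  proof -
    have "y \<in> K \<longleftrightarrow> y \<in> \<Inter>Fs" using Fs(2) affK by auto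
    also have "\<dots> \<longleftrightarrow> (\<forall>h\<in>Fs. a h \<bullet> y \<le> \<beta> h)" using ab by auto
    finally show ?thesis .
  qed
  have Ffacet: "F j facet_of K" if "j \<le> N" for j using assms(5) that by auto
  have "\<exists>h. h \<in> Fs \<and> F j = K \<inter> {x. a h \<bullet> x = \<beta> h}" if "j \<le> N" for j
    using Ffacet[OF that] facetiff by blast
  then obtain hj where hj: "\<And>j. j \<le> N \<Longrightarrow> hj j \<in> Fs \<and> F j = K \<inter> {x. a (hj j) \<bullet> x = \<beta> (hj j)}"
    by metis
  define u where "u j = a (hj j)" for j
  define c where "c j = \<beta> (hj j)" for j
  have u0: "u j \<noteq> 0" if "j \<le> N" for j using hj[OF that] ab by (auto simp: u_def)
  have Fu: "F j = K \<inter> {x. u j \<bullet> x = c j}" if "j \<le> N" for j using hj[OF that] by (simp add: u_def c_def)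
  have Ku: "u j \<bullet> y \<le> c j" if "j \<le> N" "y \<in> K" for j y
    using hj[OF that(1)] Kin that(2) by (auto simp: u_def c_def)
  have pu: "u j \<bullet> p < c j" if "j \<le> N" for j
    using hj[OF that] pstrict by (auto simp: u_def c_def)
  have hullF: "affine hull F j = {x. u j \<bullet> x = c j}" if "j \<le> N" for j
    by (rule facet_hull[OF Ffacet[OF that] assms(3)]) (use Fu[OF that] u0[OF that] in auto)
  have "\<exists>m. m \<noteq> 0 \<and> u j = m *\<^sub>R nv j" if j: "j \<le> N" for j
  proof -
    have "F j \<subseteq> {x. nv j \<bullet> x = - b j}"
      using assms(7)[OF j] by (force simp: eq_neg_iff_add_eq_0)
    then have "affine hull F j \<subseteq> {x. nv j \<bullet> x = - b j}"
      using hull_minimal[of "F j" "{x. nv j \<bullet> x = - b j}" affine] affine_hyperplane by blast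
    then have "{x. u j \<bullet> x = c j} \<subseteq> {x. nv j \<bullet> x = - b j}" using hullF[OF j] by simp
    then have nvu: "nv j = (nv j \<bullet> u j / (u j \<bullet> u j)) *\<^sub>R u j"
      using hyp_incl[OF u0[OF j]] by blast
    define m where "m = nv j \<bullet> u j / (u j \<bullet> u j)"
    have m0: "m \<noteq> 0" using nvu assms(6)[OF j] by (auto simp: m_def)
    have "u j = (1 / m) *\<^sub>R nv j" using m0 nvu by (simp add: m_def[symmetric])
    then show ?thesis using m0 by (intro exI[of _ "1 / m"]) simp
  qed
  then obtain \<mu> where mu: "\<And>j. j \<le> N \<Longrightarrow> \<mu> j \<noteq> 0 \<and> u j = \<mu> j *\<^sub>R nv j" by metis
  have complete: "y \<in> K" if y: "\<And>j. j \<le> N \<Longrightarrow> u j \<bullet> y \<le> c j" for y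
  proof (rule ccontr)
    assume "y \<notin> K"
    then obtain h where h: "h \<in> Fs" "a h \<bullet> y > \<beta> h" using Kin by force
    then have "(K \<inter> {x. a h \<bullet> x = \<beta> h}) facet_of K" using facetiff by blast
    then obtain j where j: "j \<le> N" "F j = K \<inter> {x. a h \<bullet> x = \<beta> h}"
      using assms(5) by (metis (mono_tags, lifting) atLeastAtMost_iff imageE mem_Collect_eq)
    have "affine hull F j = {x. a h \<bullet> x = \<beta> h}"
      by (rule facet_hull[OF Ffacet[OF j(1)] assms(3)]) (use j(2) ab[OF h(1)] in auto)
    then have "{x. u j \<bullet> x = c j} \<subseteq> {x. a h \<bullet> x = \<beta> h}" using hullF[OF j(1)] by simp
    then obtain m where m: "a h = m *\<^sub>R u j" "\<beta> h = m * c j"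
      using hyp_incl[OF u0[OF j(1)]] by blast
    have "m * (u j \<bullet> p - c j) < 0" using pstrict[OF h(1)] m by (simp add: algebra_simps)
    moreover have "u j \<bullet> p - c j < 0" using pu[OF j(1)] by simp
    ultimately have "m > 0" by (simp add: mult_less_0_iff)
    moreover have "m * (u j \<bullet> y - c j) > 0" using h(2) m by (simp add: algebra_simps)
    ultimately have "u j \<bullet> y - c j > 0" by (simp add: zero_less_mult_iff)
    then show False using y[OF j(1)] by simp
  qed
  have injU: "inj_on u I"
  proof (rule inj_onI)
    fix j k assume jk: "j \<in> I" "k \<in> I" "u j = u k"
    have jN: "j \<le> N" and kN: "k \<le> N" using jk by (auto simp: I_def)
    show "j = k"
    proof (rule ccontr)
      assume ne: "j \<noteq> k"
      consider "c j = c k" | "c j < c k" | "c k < c j" by linarith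
      then show False
      proof cases
        case 1
        then have "F j = F k" using Fu[OF jN] Fu[OF kN] jk(3) by simp
        then show False using assms(4) jk ne by (auto simp: I_def inj_on_def)
      next
        case 2
        have "F k = {}" using Fu[OF kN] Ku[OF jN] jk(3) 2 by fastforce
        then show False using Ffacet[OF kN] by (simp add: facet_of_def)
      next
        case 3
        have "F j = {}" using Fu[OF jN] Ku[OF kN] jk(3) 3 by fastforce
        then show False using Ffacet[OF jN] by (simp add: facet_of_def)
      qed
    qed
  qed
  have indep: "\<forall>j\<in>B. \<nu> j = 0"
    if B: "B \<subseteq> I" "card B \<le> DIM('a)" and s: "(\<Sum>j\<in>B. \<nu> j *\<^sub>R u j) = 0" for B \<nu>
  proof -
    have "DIM('a) \<le> card I" using assms(1) cardI by simp
    then obtain A where A: "B \<subseteq> A" "A \<subseteq> I" "card A = DIM('a)"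
      using exists_subset_between[OF B(2) _ B(1) finI] by blast
    have finA: "finite A" using A finI finite_subset by blast
    have "inj_on nv A \<and> independent (nv ` A)" using assms(8) A by (simp add: I_def)
    then have nvind: "\<forall>\<nu>. (\<Sum>j\<in>A. \<nu> j *\<^sub>R nv j) = 0 \<longrightarrow> (\<forall>j\<in>A. \<nu> j = 0)"
      using indep_index[OF finA] by blast
    define \<nu>' where "\<nu>' j = (if j \<in> B then \<nu> j * \<mu> j else 0)" for j
    have "(\<Sum>j\<in>A. \<nu>' j *\<^sub>R nv j) = (\<Sum>j\<in>B. \<nu>' j *\<^sub>R nv j)"
      by (rule sum.mono_neutral_right[OF finA A(1)]) (auto simp: \<nu>'_def)
    also have "\<dots> = (\<Sum>j\<in>B. \<nu> j *\<^sub>R u j)"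
      by (rule sum.cong) (use mu B(1) in \<open>auto simp: \<nu>'_def I_def\<close>)
    finally have "\<forall>j\<in>A. \<nu>' j = 0" using nvind s by simp
    show ?thesis
    proof
      fix j assume j: "j \<in> B"
      have "\<nu>' j = 0" using \<open>\<forall>j\<in>A. \<nu>' j = 0\<close> A(1) j by blast
      then have "\<nu> j * \<mu> j = 0" using j by (simp add: \<nu>'_def)
      moreover have "\<mu> j \<noteq> 0" using mu B(1) j by (auto simp: I_def)
      ultimately show "\<nu> j = 0" by simp
    qed
  qed
  have dep: "\<exists>\<nu>. (\<Sum>j\<in>B. \<nu> j *\<^sub>R u j) = 0 \<and> (\<exists>j\<in>B. \<nu> j \<noteq> 0)"
    if B: "B \<subseteq> I" "card B = DIM('a) + 1" for B
  proof -
    have finB: "finite B" using B finI finite_subset by blast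
    have injB: "inj_on u B" using injU B(1) inj_on_subset by blast
    have "dependent (u ` B)"
      by (rule dependent_biggerset) (use B injB in \<open>simp add: card_image\<close>)
    then show ?thesis using indep_index[OF finB injB] by blast
  qed
  have indA: "inj_on u A \<and> independent (u ` A)" if A: "A \<subseteq> I" "card A = DIM('a)" for A
  proof -
    have finA: "finite A" using A finI finite_subset by blast
    have injA: "inj_on u A" using injU A(1) inj_on_subset by blast
    show ?thesis using indep_index[OF finA injA] indep[OF A(1)] A(2) injA by auto
  qed
  define PJ where "PJ J = {y. \<forall>j\<in>J. u j \<bullet> y \<le> c j}" for J
  have good: "\<exists>J. J \<subseteq> I \<and> card J = DIM('a) + 1 \<and> y \<notin> PJ J \<and> int DIM('a) simplex PJ J
       \<and> (\<forall>G. G facet_of PJ J \<longrightarrow> (\<exists>j\<le>N. F j \<subseteq> G))"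
    if y: "y \<notin> K" for y
  proof -
    obtain i where i: "i \<le> N" "u i \<bullet> y > c i" using complete y by force
    have iI: "i \<in> I" using i by (simp add: I_def)
    define S where "S = conic hull (convex hull (u ` I))"
    have "- u i \<in> S"
    proof (rule ccontr)
      assume nS: "- u i \<notin> S"
      have "closed S" unfolding S_def
      proof (rule closed_conic_hull_strong)
        have "polytope (convex hull (u ` I))" unfolding polytope_def using finI by blast
        then show "0 \<in> rel_interior (convex hull (u ` I)) \<or> polytope (convex hull (u ` I)) \<or>
          compact (convex hull (u ` I)) \<and> 0 \<notin> convex hull (u ` I)" by blast
      qed
      moreover have "convex S" unfolding S_def by (simp add: convex_conic_hull)
      ultimately have "\<exists>a b. a \<bullet> (- u i) < b \<and> (\<forall>x\<in>S. a \<bullet> x > b)"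
        using nS by (intro separating_hyperplane_closed_point)
      then obtain a0 b0 where ab0: "a0 \<bullet> (- u i) < b0" "\<And>x. x \<in> S \<Longrightarrow> b0 < a0 \<bullet> x"
        by blast
      have "0 \<in> S" using iI by (auto simp: S_def)
      then have b0: "b0 < 0" using ab0(2) by fastforce
      have ge: "a0 \<bullet> u j \<ge> 0" if j: "j \<in> I" for j
      proof (rule ccontr)
        assume neg: "\<not> ?thesis"
        define r where "r = b0 / (a0 \<bullet> u j)"
        have r0: "r \<ge> 0" using neg b0 by (simp add: r_def divide_nonpos_neg)
        have "u j \<in> convex hull (u ` I)" using j by (simp add: hull_inc)
        then have "r *\<^sub>R u j \<in> S" using r0 unfolding S_def conic_hull_explicit by blast
        then have "b0 < a0 \<bullet> (r *\<^sub>R u j)" by (rule ab0(2))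
        moreover have "a0 \<bullet> (r *\<^sub>R u j) = b0" using neg by (simp add: r_def)
        ultimately show False by simp
      qed
      define y0 where "y0 = - a0"
      have "u i \<bullet> y0 < 0" using ab0(1) b0 by (simp add: y0_def inner_commute)
      then have y00: "y0 \<noteq> 0" by auto
      have "p + t *\<^sub>R y0 \<in> K" if t: "t \<ge> 0" for t
      proof (rule complete)
        fix j assume j: "j \<le> N"
        have "u j \<bullet> y0 \<le> 0" using ge[of j] j by (simp add: y0_def I_def inner_commute)
        then have "t * (u j \<bullet> y0) \<le> 0" using t by (simp add: mult_nonneg_nonpos)
        then show "u j \<bullet> (p + t *\<^sub>R y0) \<le> c j" using pu[OF j] by (simp add: inner_add_right)
      qed
      then show False
        using unbounded_ray[OF compact_imp_bounded[OF polytope_imp_compact[OF assms(2)]] y00] by blast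
    qed
    then obtain r w where rw: "- u i = r *\<^sub>R w" "r \<ge> 0" "w \<in> convex hull (u ` I)"
      unfolding S_def conic_hull_explicit by blast
    obtain \<theta> where th: "\<forall>x\<in>u ` I. 0 \<le> \<theta> x" "(\<Sum>x\<in>u ` I. \<theta> x *\<^sub>R x) = w"
      using rw(3) convex_hull_finite[of "u ` I"] finI by auto
    have w: "(\<Sum>j\<in>I. \<theta> (u j) *\<^sub>R u j) = w"
      using th(2) sum.reindex[OF injU, of "\<lambda>x. \<theta> x *\<^sub>R x"] by simp
    define l0 where "l0 j = (if j \<in> I then r * \<theta> (u j) else 0) + (if j = i then 1 else 0)" for j
    have l0sum: "(\<Sum>j\<in>I. l0 j *\<^sub>R u j) = 0"
    proof -
      have "(\<Sum>j\<in>I. l0 j *\<^sub>R u j) = (\<Sum>j\<in>I. r *\<^sub>R (\<theta> (u j) *\<^sub>R u j) + (if j = i then u j else 0))"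
        by (rule sum.cong) (auto simp: l0_def scaleR_add_left)
      also have "\<dots> = (\<Sum>j\<in>I. r *\<^sub>R (\<theta> (u j) *\<^sub>R u j)) + (\<Sum>j\<in>I. (if j = i then u j else 0))"
        by (rule sum.distrib)
      also have "(\<Sum>j\<in>I. r *\<^sub>R (\<theta> (u j) *\<^sub>R u j)) = r *\<^sub>R w"
        unfolding w[symmetric] by (rule scaleR_sum_right[symmetric])
      also have "(\<Sum>j\<in>I. (if j = i then u j else 0)) = u i"
        using iI finI by simp
      finally show ?thesis by (simp add: rw(1)[symmetric])
    qed
    have l0pos: "\<forall>j. l0 j \<ge> 0" using th(1) rw(2) by (auto simp: l0_def)
    obtain J l where J: "J \<subseteq> I" "i \<in> J" "card J = DIM('a) + 1" "\<forall>j\<in>J. l j > 0"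
        "(\<Sum>j\<in>J. l j *\<^sub>R u j) = 0"
    proof -
      have "\<forall>j. j \<notin> I \<longrightarrow> l0 j = 0" using iI by (auto simp: l0_def)
      moreover have "l0 i > 0"
      proof -
        have "\<theta> (u i) \<ge> 0" using th(1) iI by blast
        then have "r * \<theta> (u i) \<ge> 0" using rw(2) by simp
        then show ?thesis using iI by (simp add: l0_def)
      qed
      ultimately show ?thesis
        using positive_circuit[OF finI iI indep dep, of l0] l0pos l0sum that by blast
    qed
    have finJ: "finite J" using J(1) finI finite_subset by blast
    have cJk: "J - {k} \<subseteq> I \<and> card (J - {k}) = DIM('a)" if "k \<in> J" for k
      using J that finJ by (auto simp: card_Diff_singleton)
    have finJk: "finite (J - {k})" for k using finJ by simp
    have indk: "inj_on u (J-{k}) \<and> independent (u ` (J-{k}))" if k: "k \<in> J" for k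
      using indA[of "J - {k}"] cJk[OF k] by blast
    have solv: "\<forall>k\<in>J. \<exists>v. \<forall>j\<in>J-{k}. u j \<bullet> v = c j"
    proof
      fix k assume k: "k \<in> J"
      have c1: "card (J - {k}) = DIM('a)" using cJk[OF k] by blast
      show "\<exists>v. \<forall>j\<in>J-{k}. u j \<bullet> v = c j"
        by (rule solve_sys[OF finJk c1]) (use indk[OF k] in auto)
    qed
    have uniq: "\<forall>k\<in>J. \<forall>z. (\<forall>j\<in>J-{k}. u j \<bullet> z = 0) \<longrightarrow> z = 0"
    proof (intro ballI allI impI)
      fix k z assume k: "k \<in> J" and z: "\<forall>j\<in>J-{k}. u j \<bullet> z = 0"
      have c1: "card (J - {k}) = DIM('a)" using cJk[OF k] by blast
      show "z = 0"
        by (rule basis_zero[OF finJk c1]) (use indk[OF k] z in auto)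
    qed
    have pJ: "\<forall>j\<in>J. u j \<bullet> p < c j" using pu J(1) by (auto simp: I_def)
    note sp = simplex_part[OF finJ J(3) J(4) J(5) solv uniq pJ]
    have "\<forall>G. G facet_of PJ J \<longrightarrow> (\<exists>j\<le>N. F j \<subseteq> G)"
    proof (intro allI impI)
      fix G assume "G facet_of PJ J"
      then obtain k where k: "k \<in> J" "{y. (\<forall>j\<in>J. u j \<bullet> y \<le> c j) \<and> u k \<bullet> y = c k} \<subseteq> G"
        using sp by (auto simp: PJ_def)
      have kN: "k \<le> N" using k J(1) by (auto simp: I_def)
      have "F k \<subseteq> G"
      proof
        fix x assume "x \<in> F k"
        then have "x \<in> K" "u k \<bullet> x = c k" using Fu[OF kN] by auto
        moreover have "\<forall>j\<in>J. u j \<bullet> x \<le> c j" using Ku \<open>x \<in> K\<close> J(1) by (auto simp: I_def)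
        ultimately show "x \<in> G" using k(2) by auto
      qed
      then show "\<exists>j\<le>N. F j \<subseteq> G" using kN by blast
    qed
    moreover have "y \<notin> PJ J" using i(2) J(2) unfolding PJ_def by force
    ultimately show ?thesis using J sp by (intro exI[of _ J]) (auto simp: PJ_def)
  qed
  define SS where "SS = {T. \<exists>J. J \<subseteq> I \<and> card J = DIM('a) + 1 \<and> T = PJ J \<and> int DIM('a) simplex T
       \<and> (\<forall>G. G facet_of T \<longrightarrow> (\<exists>j\<le>N. F j \<subseteq> G))}"
  have sub: "SS \<subseteq> PJ ` {J. J \<subseteq> I \<and> card J = DIM('a) + 1}" by (auto simp: SS_def)
  have fin2: "finite {J. J \<subseteq> I \<and> card J = DIM('a) + 1}" using finI by simp
  have finSS: "finite SS" using finite_subset[OF sub finite_imageI[OF fin2]] .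
  have "card SS \<le> card (PJ ` {J. J \<subseteq> I \<and> card J = DIM('a) + 1})"
    by (rule card_mono[OF finite_imageI[OF fin2] sub])
  also have "\<dots> \<le> card {J. J \<subseteq> I \<and> card J = DIM('a) + 1}" by (rule card_image_le[OF fin2])
  also have "\<dots> = (N + 1) choose (DIM('a) + 1)" using n_subsets[OF finI] cardI by simp
  finally have cardSS: "card SS \<le> (N + 1) choose (DIM('a) + 1)" .
  have KS: "K = \<Inter> SS"
  proof
    show "K \<subseteq> \<Inter> SS"
    proof
      fix y assume yK: "y \<in> K"
      show "y \<in> \<Inter> SS"
      proof
        fix T assume "T \<in> SS"
        then obtain J where J: "J \<subseteq> I" "T = PJ J" by (auto simp: SS_def)
        have "\<forall>j\<in>J. u j \<bullet> y \<le> c j" using Ku yK J(1) by (auto simp: I_def)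
        then show "y \<in> T" using J(2) by (simp add: PJ_def)
      qed
    qed
    show "\<Inter> SS \<subseteq> K"
    proof
      fix y assume yS: "y \<in> \<Inter> SS"
      show "y \<in> K"
      proof (rule ccontr)
        assume "y \<notin> K"
        then obtain J where "J \<subseteq> I \<and> card J = DIM('a) + 1 \<and> y \<notin> PJ J \<and> int DIM('a) simplex PJ J
          \<and> (\<forall>G. G facet_of PJ J \<longrightarrow> (\<exists>j\<le>N. F j \<subseteq> G))" using good by blast
        then have "PJ J \<in> SS" "y \<notin> PJ J" by (auto simp: SS_def)
        then show False using yS by blast
      qed
    qed
  qed
  show ?thesis
    by (intro exI[of _ SS]) (use finSS cardSS KS in \<open>auto simp: SS_def\<close>)
qed


end
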